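(* Let $a,c,p\in\mathbb{C}$ with $-c\notin\mathbb{N}\cup\{0\}$ and $c\neq2$. Write $\cos(pz)M(a,c;z)=\sum_{n=0}^\infty u_nz^n$, $z\in\mathbb{C}$. Then $u_0=1$, $u_1=\frac ac$, $u_2=\frac12\left(\frac{a^2+a}{c^2+c}-p^2\right)$, $u_3=\frac{a}{6c}\left(\frac{(a+1)(a+2)}{(c+1)(c+2)}-3p^2\right)$, \[ u_4=\frac1{24}\left(-\frac{6a(a+1)p^2}{c(c+1)}+\frac{a(a+1)(a+2)(a+3)}{c(c+1)(c+2)(c+3)}+p^4\right), \] \[ u_5=\frac{a}{120c}\left(-\frac{10(a+1)(a+2)p^2}{(c+1)(c+2)}+\frac{(a+1)(a+2)(a+3)(a+4)}{(c+1)(c+2)(c+3)(c+4)}+5p^4\right), \] and for all integers $n\ge5$, \[ u_{n+1}=\sum_{i=0}^5\beta_i(n)u_{n-i}, \] where, with $D(n)=(c-2)c\,n(n+1)(c+n-1)(c+n)$, \[ \beta_0(n)=\frac{2\left(a\left(c^2-2cn+c-2(n-2)^2\right)+c(n-1)(2c+n-5)\right)}{(c-2)c(n+1)(c+n)}, \] \[ \beta_1(n)=\frac{1}{D(n)}\Big[-(n-4)(n-3)(n-2)(n-1)(4p^2+1)+2(n-3)(n-2)(n-1)\big(4a-c(4p^2+3)\big) +(n-2)(n-1)\big(8a^2+a(4c+6)-6c((c-2)p^2+c)+c\big) +2(n-1)\big(a^2(4c-2)-3a(c-1)c+c(-c^2+c+2)p^2\big) -(c-2)\big(a^2(c+2)-ac+c^2(c+1)p^2\big)\Big],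 \] \[ \beta_2(n)=\frac{1}{D(n)}\Big[-2p^2(c-3)\big(a(3c+8)-2c^2+c-32\big)+2p^2\big(n(-10a+c(3c-31)+104)+6(c-6)n^2+4n^3\big) -2(a+n-3)\big(2a^2-a(c-2n+3)-(n-2)(2c+n-4)\big)\Big], \] \[ \beta_3(n)=-\frac{1}{D(n)}\Big[p^2\big(12a^2-2a(6c+5)+c(6c-1)\big)+2(n-3)\big(a+c(4p^2+3)p^2\big) +(a-1)a+5(c-2)cp^4+(n-4)(n-3)(8p^4+6p^2+1)\Big], \] \[ \beta_4(n)=\frac{2p^2\left(p^2(-6a+5c+4(n-4))-3a+2c+n-4\right)}{D(n)},\qquad \beta_5(n)=-\frac{p^2(4p^4+5p^2+1)}{D(n)}. \]
   Context: For $a\in\mathbb{C}$, $(a)_n=a(a+1)\cdots(a+n-1)$ denotes the Pochhammer symbol, with $(a)_0=1$. For $a,c\in\mathbb{C}$ with $-c\notin\mathbb{N}\cup\{0\}$, the confluent hypergeometric (Kummer) function is $M(a,c;z)=\sum_{n=0}^\infty \frac{(a)_n}{(c)_n\,n!}z^n$, $z\in\mathbb{C}$. *)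

theory Defs
  imports "HOL-Analysis.Analysis"
begin

definition kummerM :: "complex \<Rightarrow> complex \<Rightarrow> complex \<Rightarrow> complex" where
  "kummerM a c z = (\<Sum>n. pochhammer a n / (pochhammer c n * fact n) * z ^ n)"

definition Dn :: "complex \<Rightarrow> nat \<Rightarrow> complex" where
  "Dn c n = (let x = of_nat n in (c - 2) * c * x * (x + 1) * (c + x - 1) * (c + x))"

definition beta0 :: "complex \<Rightarrow> complex \<Rightarrow> complex \<Rightarrow> nat \<Rightarrow> complex" where
  "beta0 a c p n = (let x = of_nat n in
     2 * (a * (c^2 - 2*c*x + c - 2*(x - 2)^2) + c*(x - 1)*(2*c + x - 5))
     / ((c - 2) * c * (x + 1) * (c + x)))"

definition beta1 :: "complex \<Rightarrow> complex \<Rightarrow> complex \<Rightarrow> nat \<Rightarrow> complex" where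
  "beta1 a c p n = (let x = of_nat n in
     (- (x - 4)*(x - 3)*(x - 2)*(x - 1)*(4*p^2 + 1)
      + 2*(x - 3)*(x - 2)*(x - 1)*(4*a - c*(4*p^2 + 3))
      + (x - 2)*(x - 1)*(8*a^2 + a*(4*c + 6) - 6*c*((c - 2)*p^2 + c) + c)
      + 2*(x - 1)*(a^2*(4*c - 2) - 3*a*(c - 1)*c + c*(- (c^2) + c + 2)*p^2)
      - (c - 2)*(a^2*(c + 2) - a*c + c^2*(c + 1)*p^2)) / Dn c n)"

definition beta2 :: "complex \<Rightarrow> complex \<Rightarrow> complex \<Rightarrow> nat \<Rightarrow> complex" where
  "beta2 a c p n = (let x = of_nat n in
     (- 2*p^2*(c - 3)*(a*(3*c + 8) - 2*c^2 + c - 32)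
      + 2*p^2*(x*(- 10*a + c*(3*c - 31) + 104) + 6*(c - 6)*x^2 + 4*x^3)
      - 2*(a + x - 3)*(2*a^2 - a*(c - 2*x + 3) - (x - 2)*(2*c + x - 4))) / Dn c n)"

definition beta3 :: "complex \<Rightarrow> complex \<Rightarrow> complex \<Rightarrow> nat \<Rightarrow> complex" where
  "beta3 a c p n = (let x = of_nat n in
     - (p^2*(12*a^2 - 2*a*(6*c + 5) + c*(6*c - 1))
        + 2*(x - 3)*(a + c*(4*p^2 + 3)*p^2)
        + (a - 1)*a + 5*(c - 2)*c*p^4
        + (x - 4)*(x - 3)*(8*p^4 + 6*p^2 + 1)) / Dn c n)"

definition beta4 :: "complex \<Rightarrow> complex \<Rightarrow> complex \<Rightarrow> nat \<Rightarrow> complex" where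
  "beta4 a c p n = (let x = of_nat n in
     2*p^2*(p^2*(- 6*a + 5*c + 4*(x - 4)) - 3*a + 2*c + x - 4) / Dn c n)"

definition beta5 :: "complex \<Rightarrow> complex \<Rightarrow> complex \<Rightarrow> nat \<Rightarrow> complex" where
  "beta5 a c p n = - (p^2*(4*p^4 + 5*p^2 + 1)) / Dn c n"

end

theory Submission
  imports Defs
begin


definition km :: "complex \<Rightarrow> complex \<Rightarrow> nat \<Rightarrow> complex" where
  "km a c n = pochhammer a n / (pochhammer c n * fact n)"

lemma c_plus_nz:
  assumes "\<forall>k::nat. - c \<noteq> of_nat k" shows "c + of_nat n \<noteq> (0::complex)"
  using assms by (metis add.commute add_eq_0_iff)

lemma poch_nz:
  assumes "\<forall>k::nat. - c \<noteq> of_nat k" shows "pochhammer c n \<noteq> (0::complex)"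
  using assms by (auto simp: pochhammer_eq_0_iff)

lemma km_Suc:
  assumes "\<forall>k::nat. - c \<noteq> of_nat k"
  shows "km a c (Suc n) = (a + of_nat n) / ((of_nat n + 1) * (c + of_nat n)) * km a c n"
  using poch_nz[OF assms, of n] c_plus_nz[OF assms, of n]
  by (simp add: km_def pochhammer_rec' field_simps)

lemma km_lim:
  fixes a c z :: complex
  assumes hc: "\<forall>k::nat. - c \<noteq> of_nat k"
  shows "(\<lambda>n. (a + of_nat n) / ((of_nat n + 1) * (c + of_nat n)) * z) \<longlonglongrightarrow> 0"
proof -
  have lim: "(\<lambda>n. (1 + a * inverse (of_nat n)) * inverse (of_nat n) * z /
      ((1 + inverse (of_nat n)) * (1 + c * inverse (of_nat n)))) \<longlonglongrightarrow>
      (1 + a * 0) * 0 * z / ((1 + 0) * (1 + c * 0))"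
    by (intro tendsto_intros lim_inverse_n) auto
  have ev: "\<forall>\<^sub>F n in sequentially. (1 + a * inverse (of_nat n)) * inverse (of_nat n) * z /
      ((1 + inverse (of_nat n)) * (1 + c * inverse (of_nat n)))
      = (a + of_nat n) / ((of_nat n + 1) * (c + of_nat n)) * z"
  proof (rule eventually_sequentiallyI[of 1])
    fix n :: nat assume "n \<ge> 1"
    define x where "x = (of_nat n :: complex)"
    have x0: "x \<noteq> 0" unfolding x_def using \<open>n \<ge> 1\<close> by simp
    have n1: "x + 1 \<noteq> 0" unfolding x_def by (metis of_nat_Suc of_nat_eq_0_iff Suc_neq_Zero add.commute)
    have cn: "c + x \<noteq> 0" unfolding x_def by (rule c_plus_nz[OF hc])
    have "(1 + a * inverse x) * inverse x * z / ((1 + inverse x) * (1 + c * inverse x))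
        = ((x + a) / x) * (1/x) * z / (((x + 1)/x) * ((x + c)/x))"
      using x0 by (simp add: field_simps)
    also have "\<dots> = (a + x) / ((x + 1) * (c + x)) * z"
      using x0 n1 cn by (simp add: divide_simps) (simp add: algebra_simps)
    finally show "(1 + a * inverse (of_nat n)) * inverse (of_nat n) * z /
      ((1 + inverse (of_nat n)) * (1 + c * inverse (of_nat n)))
      = (a + of_nat n) / ((of_nat n + 1) * (c + of_nat n)) * z" unfolding x_def .
  qed
  show ?thesis using Lim_transform_eventually[OF lim ev] by simp
qed

lemma km_summable:
  assumes hc: "\<forall>k::nat. - c \<noteq> of_nat k"
  shows "summable (\<lambda>n. km a c n * z ^ n)"
proof -
  obtain N where N: "\<And>n. n \<ge> N \<Longrightarrow>
      norm ((a + of_nat n) / ((of_nat n + 1) * (c + of_nat n)) * z) < 1/2"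
    using km_lim[OF hc, of a z] unfolding LIMSEQ_iff by (metis diff_zero half_gt_zero zero_less_one)
  show ?thesis
  proof (rule summable_ratio_test[of "1/2" N])
    fix n assume "n \<ge> N"
    define r where "r = (a + of_nat n) / ((of_nat n + 1) * (c + of_nat n)) * z"
    have "km a c (Suc n) * z ^ Suc n = r * (km a c n * z ^ n)"
      unfolding r_def by (simp add: km_Suc[OF hc])
    then have "norm (km a c (Suc n) * z ^ Suc n) = norm r * norm (km a c n * z ^ n)"
      by (metis norm_mult)
    moreover have "norm r < 1/2" using N[OF \<open>n \<ge> N\<close>] unfolding r_def .
    ultimately show "norm (km a c (Suc n) * z ^ Suc n) \<le> 1/2 * norm (km a c n * z ^ n)"
      by (metis less_imp_le mult_right_mono norm_ge_zero)
  qed simp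
qed

lemma kummer_fps:
  assumes hc: "\<forall>k::nat. - c \<noteq> of_nat k"
  shows "kummerM a c has_fps_expansion Abs_fps (km a c)"
proof -
  have "fps_conv_radius (Abs_fps (km a c)) = \<infinity>"
    unfolding fps_conv_radius_def by (simp add: conv_radius_inftyI'' km_summable[OF hc])
  moreover have "eval_fps (Abs_fps (km a c)) z = kummerM a c z" for z
    by (simp add: eval_fps_def kummerM_def km_def)
  ultimately show ?thesis unfolding has_fps_expansion_def by simp
qed

lemma u_fps:
  assumes hc: "\<forall>k::nat. - c \<noteq> of_nat k"
    and hu: "\<forall>z. (\<lambda>n. u n * z ^ n) sums (cos (p * z) * kummerM a c z)"
  shows "u n = fps_nth (fps_cos p * Abs_fps (km a c)) n"
proof -
  have e1: "(\<lambda>z. cos (p * z) * kummerM a c z) has_fps_expansion fps_cos p * Abs_fps (km a c)"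
    by (intro has_fps_expansion_mult has_fps_expansion_cos kummer_fps hc)
  have "fps_conv_radius (Abs_fps u) = \<infinity>"
    unfolding fps_conv_radius_def using hu
    by (intro conv_radius_inftyI'') (auto intro: sums_summable)
  moreover have "eval_fps (Abs_fps u) z = cos (p * z) * kummerM a c z" for z
    using hu by (simp add: eval_fps_def sums_iff)
  ultimately have e2: "(\<lambda>z. cos (p * z) * kummerM a c z) has_fps_expansion Abs_fps u"
    unfolding has_fps_expansion_def by simp
  show ?thesis
    using fps_nth_fps_expansion[OF e1, of n] fps_nth_fps_expansion[OF e2, of n] by simp
qed



lemma ring_aux:
  fixes X Q C A E K K1 K2 T U B :: "'a::comm_ring_1"
  assumes "X*K2 + C*K1 - X*K1 - A*K = 0" "T = Q + Q" "U = Q*Q + Q" "B = Q*C + A"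
  shows "X*(Q*(Q*E*K + E*K1) + Q*E*K1 + E*K2) + C*(Q*E*K + E*K1) - X*(Q*E*K + E*K1)
     - T*(X*(Q*E*K + E*K1)) + U*(X*(E*K)) - B*(E*K) = 0"
proof -
  have "X*(Q*(Q*E*K + E*K1) + Q*E*K1 + E*K2) + C*(Q*E*K + E*K1) - X*(Q*E*K + E*K1)
     - T*(X*(Q*E*K + E*K1)) + U*(X*(E*K)) - B*(E*K) = E * (X*K2 + C*K1 - X*K1 - A*K)"
    using assms(2-4) by (simp add: algebra_simps)
  then show ?thesis using assms(1) by simp
qed

lemma M_ode:
  assumes hc: "\<forall>k::nat. - c \<noteq> of_nat k"
  shows "fps_X * fps_deriv (fps_deriv (Abs_fps (km a c))) + fps_const c * fps_deriv (Abs_fps (km a c))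
     - fps_X * fps_deriv (Abs_fps (km a c)) - fps_const a * Abs_fps (km a c) = 0"
proof (rule fps_ext)
  fix n
  have Y: "(of_nat n + 1) * (c + of_nat n) \<noteq> (0::complex)"
    using c_plus_nz[OF hc, of n] by (metis mult_eq_0_iff of_nat_Suc of_nat_eq_0_iff Suc_neq_Zero add.commute)
  have "of_nat (Suc n) * (c + of_nat n) * km a c (Suc n)
      = ((of_nat n + 1) * (c + of_nat n)) * ((a + of_nat n) / ((of_nat n + 1) * (c + of_nat n))) * km a c n"
    by (simp add: km_Suc[OF hc] algebra_simps)
  also have "\<dots> = (a + of_nat n) * km a c n" using Y by simp
  finally have r: "of_nat (Suc n) * (c + of_nat n) * km a c (Suc n) = (a + of_nat n) * km a c n" .
  show "fps_nth (fps_X * fps_deriv (fps_deriv (Abs_fps (km a c))) + fps_const c * fps_deriv (Abs_fps (km a c))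
     - fps_X * fps_deriv (Abs_fps (km a c)) - fps_const a * Abs_fps (km a c)) n = fps_nth 0 n"
  proof (cases n)
    case 0
    then show ?thesis using r by (simp add: algebra_simps)
  next
    case (Suc m)
    then show ?thesis using r by (simp add: algebra_simps)
  qed
qed

lemma V_rec:
  fixes a c q :: complex
  assumes hc: "\<forall>k::nat. - c \<noteq> of_nat k"
  defines "V \<equiv> fps_exp q * Abs_fps (km a c)"
  shows "(of_nat n + 2) * (of_nat n + 1 + c) * (fps_nth V (n+2))
       = ((1 + 2*q) * (of_nat n + 1) + q*c + a) * (fps_nth V (n+1)) - q*(q+1) * (fps_nth V n)"
proof -
  define K where "K = Abs_fps (km a c)"
  define E where "E = fps_exp q"
  define K1 where "K1 = fps_deriv K"
  define K2 where "K2 = fps_deriv K1"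
  define D1 where "D1 = fps_deriv V"
  define D2 where "D2 = fps_deriv D1"
  have d1: "D1 = fps_const q * E * K + E * K1"
    unfolding D1_def V_def K1_def E_def K_def by (simp add: algebra_simps)
  have d2: "D2 = fps_const q * (fps_const q * E * K + E * K1) + fps_const q * E * K1 + E * K2"
    unfolding D2_def d1 K2_def K1_def E_def by (simp add: algebra_simps)
  have ode: "fps_X * D2 + fps_const c * D1 - fps_X * D1 - fps_const (2*q) * (fps_X * D1)
      + fps_const (q*q+q) * (fps_X * V) - fps_const (q*c+a) * V = 0"
    unfolding d1 d2 V_def E_def[symmetric] K_def[symmetric]
    by (rule ring_aux[where A="fps_const a" and C="fps_const c" and Q="fps_const q" and X=fps_X]) (use M_ode[OF hc, of a] in \<open>simp_all add: K_def K1_def K2_def\<close>)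
  have "fps_nth (fps_X * D2 + fps_const c * D1 - fps_X * D1 - fps_const (2*q) * (fps_X * D1)
      + fps_const (q*q+q) * (fps_X * V) - fps_const (q*c+a) * V) (n+1) = 0"
    by (simp only: ode) simp
  then have "of_nat (n+1) * (of_nat (n+2) * fps_nth V (n+2)) + c * (of_nat (n+2) * fps_nth V (n+2))
      - of_nat (n+1) * fps_nth V (n+1) - 2*q * (of_nat (n+1) * fps_nth V (n+1))
      + (q*q+q) * fps_nth V n - (q*c+a) * fps_nth V (n+1) = 0"
    unfolding D2_def D1_def by (simp add: numeral_2_eq_2)
  then show ?thesis by (simp add: algebra_simps)
qed



lemma ident:
  fixes x a c q W0 W1 W2 W3 W4 W5 W6 :: complex
  shows "((c - 2) * c * x * (x + 1) * (c + x - 1) * (c + x)) * W0 - (2 * (a * (c^2 - 2*c*x + c - 2*(x - 2)^2) + c*(x - 1)*(2*c + x - 5)) * (x * (c + x - 1)) * W1 + (- (x - 4)*(x - 3)*(x - 2)*(x - 1)*(4*(-(q^2)) + 1)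
      + 2*(x - 3)*(x - 2)*(x - 1)*(4*a - c*(4*(-(q^2)) + 3))
      + (x - 2)*(x - 1)*(8*a^2 + a*(4*c + 6) - 6*c*((c - 2)*(-(q^2)) + c) + c)
      + 2*(x - 1)*(a^2*(4*c - 2) - 3*a*(c - 1)*c + c*(- (c^2) + c + 2)*(-(q^2)))
      - (c - 2)*(a^2*(c + 2) - a*c + c^2*(c + 1)*(-(q^2)))) * W2 + (- 2*(-(q^2))*(c - 3)*(a*(3*c + 8) - 2*c^2 + c - 32)
      + 2*(-(q^2))*(x*(- 10*a + c*(3*c - 31) + 104) + 6*(c - 6)*x^2 + 4*x^3)
      - 2*(a + x - 3)*(2*a^2 - a*(c - 2*x + 3) - (x - 2)*(2*c + x - 4))) * W3 + (- ((-(q^2))*(12*a^2 - 2*a*(6*c + 5) + c*(6*c - 1))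
        + 2*(x - 3)*(a + c*(4*(-(q^2)) + 3)*(-(q^2)))
        + (a - 1)*a + 5*(c - 2)*c*((-(q^2))^2)
        + (x - 4)*(x - 3)*(8*((-(q^2))^2) + 6*(-(q^2)) + 1))) * W4 + (2*(-(q^2))*((-(q^2))*(- 6*a + 5*c + 4*(x - 4)) - 3*a + 2*c + x - 4)) * W5 + (- ((-(q^2))*(4*((-(q^2))^2) + 5*(-(q^2)) + 1))) * W6) =
  (x^2*c^2 - 2*x^2*c + x*c^3 - 3*x*c^2 + 2*x*c) * ((x - 0 + 1) * (x - 0 + c) * W0 - ((1 + 2*q) * (x - 0) + q*c + a) * W1 + q*(q+1) * W2) + (4*x^2*a - 2*x^2*c + 4*x*a*c - 16*x*a + 2*x*c^2*q - 3*x*c^2 - 4*x*c*q + 10*x*c - a*c^2 - 4*a*c + 16*a + c^3*q - 2*c^2*q + 4*c^2 - 10*c) * ((x - 1 + 1) * (x - 1 + c) * W1 - ((1 + 2*q) * (x - 1) + q*c + a) * W2 + q*(q+1) * W3) + (- 4*x^2*q^2 + x^2 + 8*x*a*q - 4*x*a - 4*x*c*q^2 - 4*x*c*q + 3*x*c + 28*x*q^2 - 7*x - 4*a^2 + 4*a*c*q + 2*a*c - 16*a*q + 10*a + c^2*q^2 - 3*c^2*q + 10*c*q^2 + 10*c*q - 8*c - 48*q^2 + 12) * ((x - 2 + 1) * (x - 2 + c) * W2 - ((1 + 2*q) * (x - 2) + q*c + a) * W3 + q*(q+1) * W4) + (- 8*x*q^3 + 4*x*q^2 + 2*x*q - x +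 8*a*q^2 - 4*a*q - a - 4*c*q^3 - 2*c*q^2 + 3*c*q + 32*q^3 - 16*q^2 - 8*q + 4) * ((x - 3 + 1) * (x - 3 + c) * W3 - ((1 + 2*q) * (x - 3) + q*c + a) * W4 + q*(q+1) * W5) + (- 4*q^4 + 4*q^3 + q^2 - q) * ((x - 4 + 1) * (x - 4 + c) * W4 - ((1 + 2*q) * (x - 4) + q*c + a) * W5 + q*(q+1) * W6)"
  by (simp add: algebra_simps power2_eq_square power3_eq_cube power4_eq_xxxx)

lemma ident2:
  fixes x a c q W0 W1 W2 W3 W4 W5 W6 :: complex
  assumes R0: "((x - 0 + 1) * (x - 0 + c) * W0 - ((1 + 2*q) * (x - 0) + q*c + a) * W1 + q*(q+1) * W2) = 0"
    and R1: "((x - 1 + 1) * (x - 1 + c) * W1 - ((1 + 2*q) * (x - 1) + q*c + a) * W2 + q*(q+1) * W3) = 0"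
    and R2: "((x - 2 + 1) * (x - 2 + c) * W2 - ((1 + 2*q) * (x - 2) + q*c + a) * W3 + q*(q+1) * W4) = 0"
    and R3: "((x - 3 + 1) * (x - 3 + c) * W3 - ((1 + 2*q) * (x - 3) + q*c + a) * W4 + q*(q+1) * W5) = 0"
    and R4: "((x - 4 + 1) * (x - 4 + c) * W4 - ((1 + 2*q) * (x - 4) + q*c + a) * W5 + q*(q+1) * W6) = 0"
  shows "((c - 2) * c * x * (x + 1) * (c + x - 1) * (c + x)) * W0 = 2 * (a * (c^2 - 2*c*x + c - 2*(x - 2)^2) + c*(x - 1)*(2*c + x - 5)) * (x * (c + x - 1)) * W1 + (- (x - 4)*(x - 3)*(x - 2)*(x - 1)*(4*(-(q^2)) + 1)
      + 2*(x - 3)*(x - 2)*(x - 1)*(4*a - c*(4*(-(q^2)) + 3))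
      + (x - 2)*(x - 1)*(8*a^2 + a*(4*c + 6) - 6*c*((c - 2)*(-(q^2)) + c) + c)
      + 2*(x - 1)*(a^2*(4*c - 2) - 3*a*(c - 1)*c + c*(- (c^2) + c + 2)*(-(q^2)))
      - (c - 2)*(a^2*(c + 2) - a*c + c^2*(c + 1)*(-(q^2)))) * W2 + (- 2*(-(q^2))*(c - 3)*(a*(3*c + 8) - 2*c^2 + c - 32)
      + 2*(-(q^2))*(x*(- 10*a + c*(3*c - 31) + 104) + 6*(c - 6)*x^2 + 4*x^3)
      - 2*(a + x - 3)*(2*a^2 - a*(c - 2*x + 3) - (x - 2)*(2*c + x - 4))) * W3 + (- ((-(q^2))*(12*a^2 - 2*a*(6*c + 5) + c*(6*c - 1))
        + 2*(x - 3)*(a + c*(4*(-(q^2)) + 3)*(-(q^2)))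
        + (a - 1)*a + 5*(c - 2)*c*((-(q^2))^2)
        + (x - 4)*(x - 3)*(8*((-(q^2))^2) + 6*(-(q^2)) + 1))) * W4 + (2*(-(q^2))*((-(q^2))*(- 6*a + 5*c + 4*(x - 4)) - 3*a + 2*c + x - 4)) * W5 + (- ((-(q^2))*(4*((-(q^2))^2) + 5*(-(q^2)) + 1))) * W6"
proof -
  have "((c - 2) * c * x * (x + 1) * (c + x - 1) * (c + x)) * W0 - (2 * (a * (c^2 - 2*c*x + c - 2*(x - 2)^2) + c*(x - 1)*(2*c + x - 5)) * (x * (c + x - 1)) * W1 + (- (x - 4)*(x - 3)*(x - 2)*(x - 1)*(4*(-(q^2)) + 1)
      + 2*(x - 3)*(x - 2)*(x - 1)*(4*a - c*(4*(-(q^2)) + 3))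
      + (x - 2)*(x - 1)*(8*a^2 + a*(4*c + 6) - 6*c*((c - 2)*(-(q^2)) + c) + c)
      + 2*(x - 1)*(a^2*(4*c - 2) - 3*a*(c - 1)*c + c*(- (c^2) + c + 2)*(-(q^2)))
      - (c - 2)*(a^2*(c + 2) - a*c + c^2*(c + 1)*(-(q^2)))) * W2 + (- 2*(-(q^2))*(c - 3)*(a*(3*c + 8) - 2*c^2 + c - 32)
      + 2*(-(q^2))*(x*(- 10*a + c*(3*c - 31) + 104) + 6*(c - 6)*x^2 + 4*x^3)
      - 2*(a + x - 3)*(2*a^2 - a*(c - 2*x + 3) - (x - 2)*(2*c + x - 4))) * W3 + (- ((-(q^2))*(12*a^2 - 2*a*(6*c + 5) + c*(6*c - 1))
        + 2*(x - 3)*(a + c*(4*(-(q^2)) + 3)*(-(q^2)))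
        + (a - 1)*a + 5*(c - 2)*c*((-(q^2))^2)
        + (x - 4)*(x - 3)*(8*((-(q^2))^2) + 6*(-(q^2)) + 1))) * W4 + (2*(-(q^2))*((-(q^2))*(- 6*a + 5*c + 4*(x - 4)) - 3*a + 2*c + x - 4)) * W5 + (- ((-(q^2))*(4*((-(q^2))^2) + 5*(-(q^2)) + 1))) * W6) = (x^2*c^2 - 2*x^2*c + x*c^3 - 3*x*c^2 + 2*x*c) * ((x - 0 + 1) * (x - 0 + c) * W0 - ((1 + 2*q) * (x - 0) + q*c + a) * W1 + q*(q+1) * W2) + (4*x^2*a - 2*x^2*c + 4*x*a*c - 16*x*a + 2*x*c^2*q - 3*x*c^2 - 4*x*c*q + 10*x*c - a*c^2 - 4*a*c + 16*a + c^3*q - 2*c^2*q + 4*c^2 - 10*c) * ((x - 1 + 1) * (x - 1 + c) * W1 - ((1 + 2*q) * (x - 1) + q*c + a) * W2 + q*(q+1) * W3) + (- 4*x^2*q^2 + x^2 + 8*x*a*q - 4*x*a - 4*x*c*q^2 - 4*x*c*q + 3*x*c + 28*x*q^2 - 7*x - 4*a^2 + 4*a*c*q + 2*a*c - 16*a*q + 10*a + c^2*q^2 - 3*c^2*q + 10*c*q^2 + 10*c*q - 8*c - 48*q^2 + 12) * ((x - 2 + 1) * (x - 2 + c) * W2 - ((1 + 2*q) * (x - 2) + q*c + a) * W3 + q*(q+1) * W4) + (- 8*x*q^3 + 4*x*q^2 + 2*x*q - x + 8*a*q^2 - 4*a*q - a - 4*c*q^3 - 2*c*q^2 + 3*c*q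 + 32*q^3 - 16*q^2 - 8*q + 4) * ((x - 3 + 1) * (x - 3 + c) * W3 - ((1 + 2*q) * (x - 3) + q*c + a) * W4 + q*(q+1) * W5) + (- 4*q^4 + 4*q^3 + q^2 - q) * ((x - 4 + 1) * (x - 4 + c) * W4 - ((1 + 2*q) * (x - 4) + q*c + a) * W5 + q*(q+1) * W6)"
    by (rule ident)
  also have "\<dots> = 0" by (simp only: R0 R1 R2 R3 R4 mult_zero_right add_0_right)
  finally have "((c - 2) * c * x * (x + 1) * (c + x - 1) * (c + x)) * W0 - (2 * (a * (c^2 - 2*c*x + c - 2*(x - 2)^2) + c*(x - 1)*(2*c + x - 5)) * (x * (c + x - 1)) * W1 + (- (x - 4)*(x - 3)*(x - 2)*(x - 1)*(4*(-(q^2)) + 1)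
      + 2*(x - 3)*(x - 2)*(x - 1)*(4*a - c*(4*(-(q^2)) + 3))
      + (x - 2)*(x - 1)*(8*a^2 + a*(4*c + 6) - 6*c*((c - 2)*(-(q^2)) + c) + c)
      + 2*(x - 1)*(a^2*(4*c - 2) - 3*a*(c - 1)*c + c*(- (c^2) + c + 2)*(-(q^2)))
      - (c - 2)*(a^2*(c + 2) - a*c + c^2*(c + 1)*(-(q^2)))) * W2 + (- 2*(-(q^2))*(c - 3)*(a*(3*c + 8) - 2*c^2 + c - 32)
      + 2*(-(q^2))*(x*(- 10*a + c*(3*c - 31) + 104) + 6*(c - 6)*x^2 + 4*x^3)
      - 2*(a + x - 3)*(2*a^2 - a*(c - 2*x + 3) - (x - 2)*(2*c + x - 4))) * W3 + (- ((-(q^2))*(12*a^2 - 2*a*(6*c + 5) + c*(6*c - 1))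
        + 2*(x - 3)*(a + c*(4*(-(q^2)) + 3)*(-(q^2)))
        + (a - 1)*a + 5*(c - 2)*c*((-(q^2))^2)
        + (x - 4)*(x - 3)*(8*((-(q^2))^2) + 6*(-(q^2)) + 1))) * W4 + (2*(-(q^2))*((-(q^2))*(- 6*a + 5*c + 4*(x - 4)) - 3*a + 2*c + x - 4)) * W5 + (- ((-(q^2))*(4*((-(q^2))^2) + 5*(-(q^2)) + 1))) * W6) = 0" .
  then show ?thesis by (simp only: right_minus_eq)
qed


lemma fin_aux:
  fixes D W0 W1 W2 W3 W4 W5 W6 n0 n1 n2 n3 n4 n5 :: complex
  assumes "D \<noteq> 0" "D * W0 = n0 * W1 + n1 * W2 + n2 * W3 + n3 * W4 + n4 * W5 + n5 * W6"
  shows "W0 = n0 / D * W1 + n1 / D * W2 + n2 / D * W3 + n3 / D * W4 + n4 / D * W5 + n5 / D * W6"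
proof -
  have "W0 = (D * W0) / D" using assms(1) by simp
  also have "\<dots> = (n0 * W1 + n1 * W2 + n2 * W3 + n3 * W4 + n4 * W5 + n5 * W6) / D" using assms(2) by simp
  also have "\<dots> = n0 / D * W1 + n1 / D * W2 + n2 / D * W3 + n3 / D * W4 + n4 / D * W5 + n5 / D * W6"
    by (simp add: add_divide_distrib)
  finally show ?thesis .
qed

lemma L_rec:
  fixes a c p q :: complex and w :: "nat \<Rightarrow> complex"
  assumes hc: "\<forall>k::nat. - c \<noteq> of_nat k" and hc2: "c \<noteq> 2" and hq: "q^2 = - (p^2)"
    and rec: "\<forall>m. (of_nat m + 2) * (of_nat m + 1 + c) * w (m+2)
       = ((1 + 2*q) * (of_nat m + 1) + q*c + a) * w (m+1) - q*(q+1) * w m"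
    and n: "n \<ge> 5"
  shows "w (n + 1) = beta0 a c p n * w n + beta1 a c p n * w (n - 1) + beta2 a c p n * w (n - 2)
           + beta3 a c p n * w (n - 3) + beta4 a c p n * w (n - 4) + beta5 a c p n * w (n - 5)"
proof -
  obtain k where k: "n = k + 5" using n by (metis add.commute le_Suc_ex)
  define x where "x = (of_nat n :: complex)"
  have hp2: "p^2 = -(q^2)" using hq by simp
  have hp4: "p^4 = (-(q^2))^2" using hp2 by (metis power_mult numeral_times_numeral semiring_norm(12) semiring_norm(13) mult_2_right numeral_Bit0)
  have x0: "x \<noteq> 0" unfolding x_def using n by simp
  have x1: "x + 1 \<noteq> 0" unfolding x_def by (metis of_nat_Suc of_nat_eq_0_iff Suc_neq_Zero add.commute)
  have cx: "c + x \<noteq> 0" unfolding x_def by (rule c_plus_nz[OF hc])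
  have cx1: "c + x - 1 \<noteq> 0"
  proof -
    have "c + x - 1 = c + of_nat (k+4)" unfolding x_def k by simp
    then show ?thesis using c_plus_nz[OF hc, of "k+4"] by (simp add: ac_simps)
  qed
  have cx1': "c + x \<noteq> 1" using cx1 by simp
  have c0: "c \<noteq> 0" using hc[rule_format, of 0] by simp
  have c2: "c - 2 \<noteq> 0" using hc2 by simp
  have hD: "(c - 2) * c * x * (x + 1) * (c + x - 1) * (c + x) \<noteq> 0"
    using x0 x1 cx cx1 c0 c2 by simp
  have Dn: "Dn c n = (c - 2) * c * x * (x + 1) * (c + x - 1) * (c + x)"
    unfolding Dn_def Let_def x_def ..
  have b0: "beta0 a c p n = (2 * (a * (c^2 - 2*c*x + c - 2*(x - 2)^2) + c*(x - 1)*(2*c + x - 5)) * (x * (c + x - 1))) / Dn c n"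
    unfolding beta0_def Dn_def Let_def x_def[symmetric] using x0 x1 cx cx1' c0 c2 by (simp add: hp2 hp4)
  have b1: "beta1 a c p n = ((- (x - 4)*(x - 3)*(x - 2)*(x - 1)*(4*(-(q^2)) + 1)
      + 2*(x - 3)*(x - 2)*(x - 1)*(4*a - c*(4*(-(q^2)) + 3))
      + (x - 2)*(x - 1)*(8*a^2 + a*(4*c + 6) - 6*c*((c - 2)*(-(q^2)) + c) + c)
      + 2*(x - 1)*(a^2*(4*c - 2) - 3*a*(c - 1)*c + c*(- (c^2) + c + 2)*(-(q^2)))
      - (c - 2)*(a^2*(c + 2) - a*c + c^2*(c + 1)*(-(q^2))))) / Dn c n"
    unfolding beta1_def Dn_def Let_def x_def[symmetric] by (simp add: hp2 hp4)
  have b2: "beta2 a c p n = ((- 2*(-(q^2))*(c - 3)*(a*(3*c + 8) - 2*c^2 + c - 32)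
      + 2*(-(q^2))*(x*(- 10*a + c*(3*c - 31) + 104) + 6*(c - 6)*x^2 + 4*x^3)
      - 2*(a + x - 3)*(2*a^2 - a*(c - 2*x + 3) - (x - 2)*(2*c + x - 4)))) / Dn c n"
    unfolding beta2_def Dn_def Let_def x_def[symmetric] by (simp add: hp2 hp4)
  have b3: "beta3 a c p n = ((- ((-(q^2))*(12*a^2 - 2*a*(6*c + 5) + c*(6*c - 1))
        + 2*(x - 3)*(a + c*(4*(-(q^2)) + 3)*(-(q^2)))
        + (a - 1)*a + 5*(c - 2)*c*((-(q^2))^2)
        + (x - 4)*(x - 3)*(8*((-(q^2))^2) + 6*(-(q^2)) + 1)))) / Dn c n"
    unfolding beta3_def Dn_def Let_def x_def[symmetric] by (simp add: hp2 hp4)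
  have b4: "beta4 a c p n = ((2*(-(q^2))*((-(q^2))*(- 6*a + 5*c + 4*(x - 4)) - 3*a + 2*c + x - 4))) / Dn c n"
    unfolding beta4_def Dn_def Let_def x_def[symmetric] by (simp add: hp2 hp4)
  have b5: "beta5 a c p n = ((- ((-(q^2))*(4*((-(q^2))^2) + 5*(-(q^2)) + 1)))) / Dn c n"
    unfolding beta5_def Dn_def Let_def x_def[symmetric] by (simp add: hp2 hp4)
  have ixs: "k+4+2 = k+6" "k+4+1 = k+5" "k+3+2 = k+5" "k+3+1 = k+4" "k+2+2 = k+4" "k+2+1 = k+3"
    "k+1+2 = k+3" "k+1+1 = k+2" "k+0+2 = k+2" "k+0+1 = k+1" "k+0 = k" by simp_all
  have R0: "((x - 0 + 1) * (x - 0 + c) * w (k+6) - ((1 + 2*q) * (x - 0) + q*c + a) * w (k+5) + q*(q+1) * w (k+4)) = 0"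
    using rec[rule_format, of "k+4"] unfolding x_def k ixs by (simp add: algebra_simps)
  have R1: "((x - 1 + 1) * (x - 1 + c) * w (k+5) - ((1 + 2*q) * (x - 1) + q*c + a) * w (k+4) + q*(q+1) * w (k+3)) = 0"
    using rec[rule_format, of "k+3"] unfolding x_def k ixs by (simp add: algebra_simps)
  have R2: "((x - 2 + 1) * (x - 2 + c) * w (k+4) - ((1 + 2*q) * (x - 2) + q*c + a) * w (k+3) + q*(q+1) * w (k+2)) = 0"
    using rec[rule_format, of "k+2"] unfolding x_def k ixs by (simp add: algebra_simps)
  have R3: "((x - 3 + 1) * (x - 3 + c) * w (k+3) - ((1 + 2*q) * (x - 3) + q*c + a) * w (k+2) + q*(q+1) * w (k+1)) = 0"
    using rec[rule_format, of "k+1"] unfolding x_def k ixs by (simp add: algebra_simps)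
  have R4: "((x - 4 + 1) * (x - 4 + c) * w (k+2) - ((1 + 2*q) * (x - 4) + q*c + a) * w (k+1) + q*(q+1) * w k) = 0"
    using rec[rule_format, of "k+0"] unfolding x_def k ixs by (simp add: algebra_simps)
  have main: "((c - 2) * c * x * (x + 1) * (c + x - 1) * (c + x)) * w (k+6) = (2 * (a * (c^2 - 2*c*x + c - 2*(x - 2)^2) + c*(x - 1)*(2*c + x - 5)) * (x * (c + x - 1))) * w (k+5) + ((- (x - 4)*(x - 3)*(x - 2)*(x - 1)*(4*(-(q^2)) + 1)
      + 2*(x - 3)*(x - 2)*(x - 1)*(4*a - c*(4*(-(q^2)) + 3))
      + (x - 2)*(x - 1)*(8*a^2 + a*(4*c + 6) - 6*c*((c - 2)*(-(q^2)) + c) + c)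
      + 2*(x - 1)*(a^2*(4*c - 2) - 3*a*(c - 1)*c + c*(- (c^2) + c + 2)*(-(q^2)))
      - (c - 2)*(a^2*(c + 2) - a*c + c^2*(c + 1)*(-(q^2))))) * w (k+4) + ((- 2*(-(q^2))*(c - 3)*(a*(3*c + 8) - 2*c^2 + c - 32)
      + 2*(-(q^2))*(x*(- 10*a + c*(3*c - 31) + 104) + 6*(c - 6)*x^2 + 4*x^3)
      - 2*(a + x - 3)*(2*a^2 - a*(c - 2*x + 3) - (x - 2)*(2*c + x - 4)))) * w (k+3) + ((- ((-(q^2))*(12*a^2 - 2*a*(6*c + 5) + c*(6*c - 1))
        + 2*(x - 3)*(a + c*(4*(-(q^2)) + 3)*(-(q^2)))
        + (a - 1)*a + 5*(c - 2)*c*((-(q^2))^2)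
        + (x - 4)*(x - 3)*(8*((-(q^2))^2) + 6*(-(q^2)) + 1)))) * w (k+2) + ((2*(-(q^2))*((-(q^2))*(- 6*a + 5*c + 4*(x - 4)) - 3*a + 2*c + x - 4))) * w (k+1) + ((- ((-(q^2))*(4*((-(q^2))^2) + 5*(-(q^2)) + 1)))) * w k"
    by (rule ident2[OF R0 R1 R2 R3 R4])
  have idx: "n + 1 = k + 6" "w n = w (k + 5)" "n - 1 = k + 4" "n - 2 = k + 3" "n - 3 = k + 2" "n - 4 = k + 1" "n - 5 = k"
    using k by simp_all
  show ?thesis
    unfolding b0 b1 b2 b3 b4 b5 idx Dn
    by (rule fin_aux[OF hD main])
qed



lemma u_split:
  assumes hc: "\<forall>k::nat. - c \<noteq> of_nat k"
    and hu: "\<forall>z. (\<lambda>n. u n * z ^ n) sums (cos (p * z) * kummerM a c z)"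
  shows "u n = (fps_nth (fps_exp (\<i>*p) * Abs_fps (km a c)) n
              + fps_nth (fps_exp (-\<i>*p) * Abs_fps (km a c)) n) / 2"
proof -
  have h2: "fps_const 2 * fps_cos p = fps_exp (\<i>*p) + fps_exp (-\<i>*p)"
    unfolding fps_cos_fps_exp_ii by (simp flip: mult.assoc)
  have "2 * u n = fps_nth (fps_const 2 * (fps_cos p * Abs_fps (km a c))) n"
    using u_fps[OF hc hu, of n] by simp
  also have "fps_const 2 * (fps_cos p * Abs_fps (km a c))
      = fps_exp (\<i>*p) * Abs_fps (km a c) + fps_exp (-\<i>*p) * Abs_fps (km a c)"
    by (simp only: mult.assoc[symmetric] h2 distrib_right)
  finally show ?thesis by (simp add: mult.commute)
qed

lemma cos_coeffs:
  fixes p :: complex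
  shows "fps_nth (fps_cos p) 2 = - (p^2 / 2)" "fps_nth (fps_cos p) 3 = 0"
        "fps_nth (fps_cos p) 4 = p^4 / 24" "fps_nth (fps_cos p) 5 = 0"
proof -
  show c2: "fps_nth (fps_cos p) 2 = - (p^2 / 2)"
    using fps_cos_nth_add_2[of p 0] by (simp add: power2_eq_square numeral_2_eq_2)
  show "fps_nth (fps_cos p) 3 = 0"
    using fps_cos_nth_add_2[of p 1] by (simp add: eval_nat_numeral)
  have "fps_nth (fps_cos p) 4 = - (p * p * fps_nth (fps_cos p) 2 / (of_nat (2 + 1) * of_nat (2 + 2)))"
    using fps_cos_nth_add_2[of p 2] by simp
  also have "\<dots> = p^4 / 24" unfolding c2 by (simp add: field_simps power2_eq_square power4_eq_xxxx)
  finally show "fps_nth (fps_cos p) 4 = p^4 / 24" .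
  show "fps_nth (fps_cos p) 5 = 0"
    using fps_cos_nth_add_2[of p 3] fps_cos_nth_add_2[of p 1] by (simp add: eval_nat_numeral)
qed

lemma km_vals:
  fixes a c :: complex
  shows "km a c 0 = 1" "km a c 1 = a / c" "km a c 2 = a*(a+1) / (c*(c+1)*2)"
    "km a c 3 = a*(a+1)*(a+2) / (c*(c+1)*(c+2)*6)"
    "km a c 4 = a*(a+1)*(a+2)*(a+3) / (c*(c+1)*(c+2)*(c+3)*24)"
    "km a c 5 = a*(a+1)*(a+2)*(a+3)*(a+4) / (c*(c+1)*(c+2)*(c+3)*(c+4)*120)"
  by (simp_all add: km_def eval_nat_numeral pochhammer_Suc fact_Suc algebra_simps)

lemma vals_alg:
  fixes a p C0 C1 C2 C3 C4 :: complex
  assumes c0: "C0 \<noteq> 0" and c1: "C1 \<noteq> 0" and c2: "C2 \<noteq> 0" and c3: "C3 \<noteq> 0" and c4: "C4 \<noteq> 0"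
  shows
   "a*(a+1)*(a+2) / (C0*C1*C2*6) - p^2/2 * (a/C0) = a / (6*C0) * ((a + 1)*(a + 2) / (C1*C2) - 3*p^2)"
   "a*(a+1)*(a+2)*(a+3) / (C0*C1*C2*C3*24) - p^2/2 * (a*(a+1) / (C0*C1*2)) + p^4/24 = (1/24) * (- (6*a*(a + 1)*p^2) / (C0*C1)
              + a*(a + 1)*(a + 2)*(a + 3) / (C0*C1*C2*C3) + p^4)"
   "a*(a+1)*(a+2)*(a+3)*(a+4) / (C0*C1*C2*C3*C4*120) - p^2/2 * (a*(a+1)*(a+2) / (C0*C1*C2*6)) + p^4/24 * (a/C0) = a / (120*C0) * (- (10*(a + 1)*(a + 2)*p^2) / (C1*C2)
              + (a + 1)*(a + 2)*(a + 3)*(a + 4) / (C1*C2*C3*C4) + 5*p^4)"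
  using assms by (simp_all add: field_simps)

lemma u_vals:
  assumes hc: "\<forall>k::nat. - c \<noteq> of_nat k"
    and hu: "\<forall>z. (\<lambda>n. u n * z ^ n) sums (cos (p * z) * kummerM a c z)"
  shows "u 0 = 1 \<and>
    u 1 = a / c \<and>
    u 2 = (1/2) * ((a^2 + a) / (c^2 + c) - p^2) \<and>
    u 3 = a / (6*c) * ((a + 1)*(a + 2) / ((c + 1)*(c + 2)) - 3*p^2) \<and>
    u 4 = (1/24) * (- (6*a*(a + 1)*p^2) / (c*(c + 1))
              + a*(a + 1)*(a + 2)*(a + 3) / (c*(c + 1)*(c + 2)*(c + 3)) + p^4) \<and>
    u 5 = a / (120*c) * (- (10*(a + 1)*(a + 2)*p^2) / ((c + 1)*(c + 2))
              + (a + 1)*(a + 2)*(a + 3)*(a + 4) / ((c + 1)*(c + 2)*(c + 3)*(c + 4)) + 5*p^4)"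
proof -
  have c0: "c \<noteq> 0" using c_plus_nz[OF hc, of 0] by simp
  have c1: "c + 1 \<noteq> 0" using c_plus_nz[OF hc, of 1] by simp
  have c2: "c + 2 \<noteq> 0" using c_plus_nz[OF hc, of 2] by simp
  have c3: "c + 3 \<noteq> 0" using c_plus_nz[OF hc, of 3] by simp
  have c4: "c + 4 \<noteq> 0" using c_plus_nz[OF hc, of 4] by simp
  have uf: "u n = (\<Sum>i=0..n. fps_nth (fps_cos p) i * km a c (n - i))" for n
    using u_fps[OF hc hu, of n] by (simp add: fps_mult_nth)
  have s: "(\<Sum>i=0..n. f i) = (\<Sum>i<Suc n. f i)" for n and f :: "nat \<Rightarrow> complex"
    by (simp add: atLeast0AtMost lessThan_Suc_atMost)
  have e: "u n = (\<Sum>i<Suc n. fps_nth (fps_cos p) i * km a c (n - i))" for n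
    using uf s by simp
  have u0: "u 0 = 1" using e[of 0] km_vals by simp
  have u1: "u 1 = a / c" using e[of 1] km_vals by simp
  have u2: "u 2 = km a c 2 - p^2/2" using e[of 2] km_vals cos_coeffs
    by (simp add: eval_nat_numeral)
  have u3: "u 3 = km a c 3 - p^2/2 * km a c 1" using e[of 3] cos_coeffs
    by (simp add: eval_nat_numeral)
  have u4: "u 4 = km a c 4 - p^2/2 * km a c 2 + p^4/24" using e[of 4] km_vals(1) cos_coeffs
    by (simp add: eval_nat_numeral)
  have u5: "u 5 = km a c 5 - p^2/2 * km a c 3 + p^4/24 * km a c 1" using e[of 5] cos_coeffs
    by (simp add: eval_nat_numeral)
  note V = vals_alg[OF c0 c1 c2 c3 c4, of a p]
  have cc: "c^2 + c = c*(c+1)" "a^2 + a = a*(a+1)" by (simp_all add: power2_eq_square algebra_simps)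
  have g: "X/(Y*2) - P/2 = (1/2)*(X/Y - P)" for X Y P :: complex
  proof -
    have "X/(Y*2) = (X/Y)/2" by (rule divide_divide_eq_left[symmetric])
    then show "X/(Y*2) - P/2 = (1/2)*(X/Y - P)" by (simp only: diff_divide_distrib[symmetric]) simp
  qed
  have v2: "u 2 = (1/2) * ((a^2 + a) / (c^2 + c) - p^2)"
    unfolding u2 km_vals cc by (rule g)
  have v3: "u 3 = a / (6*c) * ((a + 1)*(a + 2) / ((c + 1)*(c + 2)) - 3*p^2)"
    unfolding u3 km_vals by (rule V(1))
  have v4: "u 4 = (1/24) * (- (6*a*(a + 1)*p^2) / (c*(c + 1))
              + a*(a + 1)*(a + 2)*(a + 3) / (c*(c + 1)*(c + 2)*(c + 3)) + p^4)"
    unfolding u4 km_vals by (rule V(2))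
  have v5: "u 5 = a / (120*c) * (- (10*(a + 1)*(a + 2)*p^2) / ((c + 1)*(c + 2))
              + (a + 1)*(a + 2)*(a + 3)*(a + 4) / ((c + 1)*(c + 2)*(c + 3)*(c + 4)) + 5*p^4)"
    unfolding u5 km_vals by (rule V(3))
  show ?thesis using u0 u1 v2 v3 v4 v5 by blast
qed

theorem theorem2p8:
  fixes a c p :: complex and u :: "nat \<Rightarrow> complex"
  assumes hc: "\<forall>k::nat. - c \<noteq> of_nat k"
    and hc2: "c \<noteq> 2"
    and hu: "\<forall>z. (\<lambda>n. u n * z ^ n) sums (cos (p * z) * kummerM a c z)"
  shows "u 0 = 1 \<and>
    u 1 = a / c \<and>
    u 2 = (1/2) * ((a^2 + a) / (c^2 + c) - p^2) \<and>
    u 3 = a / (6*c) * ((a + 1)*(a + 2) / ((c + 1)*(c + 2)) - 3*p^2) \<and>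
    u 4 = (1/24) * (- (6*a*(a + 1)*p^2) / (c*(c + 1))
              + a*(a + 1)*(a + 2)*(a + 3) / (c*(c + 1)*(c + 2)*(c + 3)) + p^4) \<and>
    u 5 = a / (120*c) * (- (10*(a + 1)*(a + 2)*p^2) / ((c + 1)*(c + 2))
              + (a + 1)*(a + 2)*(a + 3)*(a + 4) / ((c + 1)*(c + 2)*(c + 3)*(c + 4)) + 5*p^4) \<and>
    (\<forall>n::nat. n \<ge> 5 \<longrightarrow> u (n + 1) =
           beta0 a c p n * u n + beta1 a c p n * u (n - 1) + beta2 a c p n * u (n - 2)
           + beta3 a c p n * u (n - 3) + beta4 a c p n * u (n - 4) + beta5 a c p n * u (n - 5))"
proof -
  define w1 where "w1 = (\<lambda>n. fps_nth (fps_exp (\<i>*p) * Abs_fps (km a c)) n)"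
  define w2 where "w2 = (\<lambda>n. fps_nth (fps_exp (-\<i>*p) * Abs_fps (km a c)) n)"
  have us: "u n = (w1 n + w2 n) / 2" for n
    unfolding w1_def w2_def by (rule u_split[OF hc hu])
  have q1: "(\<i>*p)^2 = - (p^2)" by (simp add: power_mult_distrib)
  have q2: "(-\<i>*p)^2 = - (p^2)" by (simp add: power_mult_distrib)
  have r1: "\<forall>m. (of_nat m + 2) * (of_nat m + 1 + c) * w1 (m+2)
       = ((1 + 2*(\<i>*p)) * (of_nat m + 1) + (\<i>*p)*c + a) * w1 (m+1) - (\<i>*p)*((\<i>*p)+1) * w1 m"
    unfolding w1_def using V_rec[OF hc] by blast
  have r2: "\<forall>m. (of_nat m + 2) * (of_nat m + 1 + c) * w2 (m+2)
       = ((1 + 2*(-\<i>*p)) * (of_nat m + 1) + (-\<i>*p)*c + a) * w2 (m+1) - (-\<i>*p)*((-\<i>*p)+1) * w2 m"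
    unfolding w2_def using V_rec[OF hc] by blast
  have rec: "\<forall>n::nat. n \<ge> 5 \<longrightarrow> u (n + 1) =
           beta0 a c p n * u n + beta1 a c p n * u (n - 1) + beta2 a c p n * u (n - 2)
           + beta3 a c p n * u (n - 3) + beta4 a c p n * u (n - 4) + beta5 a c p n * u (n - 5)"
  proof (intro allI impI)
    fix n :: nat assume n: "n \<ge> 5"
    note L1 = L_rec[OF hc hc2 q1 r1 n]
    note L2 = L_rec[OF hc hc2 q2 r2 n]
    show "u (n + 1) =
           beta0 a c p n * u n + beta1 a c p n * u (n - 1) + beta2 a c p n * u (n - 2)
           + beta3 a c p n * u (n - 3) + beta4 a c p n * u (n - 4) + beta5 a c p n * u (n - 5)"
      unfolding us L1 L2 by (simp add: algebra_simps add_divide_distrib)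
  qed
  show ?thesis using u_vals[OF hc hu] rec by blast
qed


end
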